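(* Let $\xi=e^{i\pi/5}$. Let $n\ge3$ and let $(n_0,\dots,n_9)\in\mathbb{N}_0^{10}$ with $\sum_{j=0}^9 n_j=n$ and $\sum_{j=0}^9 n_j\xi^j\in\mathbb{R}$. Then there exist $(m_0,\dots,m_9),(k_0,\dots,k_9)\in\mathbb{N}_0^{10}$, neither identically zero, with $m_j+k_j=n_j$ for all $j$, such that $\sum_j m_j\xi^j\in\mathbb{R}$ and $\sum_j k_j\xi^j\in\mathbb{R}$. In other words, no real-valued combination of $n\ge3$ tenth roots of unity (counted with multiplicity) is nontrivial.
   Context: A combination $\sum_j n_j\xi^j$ ($n_j\in\mathbb{N}_0$) with real value is called reducible if its multiset of roots can be split into two nonempty sub-multisets each having real sum, and nontrivial otherwise; $\sum_j n_j$ is its level. *)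

theory Defs
  imports "HOL-Analysis.Analysis"
begin

definition xi :: complex where
  "xi = cis (pi / 5)"

definition comb :: "(nat \<Rightarrow> nat) \<Rightarrow> complex" where
  "comb c = (\<Sum>j<10. of_nat (c j) * xi ^ j)"

end

theory Submission
  imports Defs
begin

definition s1 :: real where "s1 = sin (pi / 5)"
definition s2 :: real where "s2 = sin (2 * pi / 5)"

lemma Im_xi_pow: "Im (xi ^ j) = sin (real j * pi / 5)"
  unfolding xi_def by (simp add: Complex.DeMoivre)

lemma sinvals:
  "sin (3 * pi / 5) = sin (2 * pi / 5)" "sin (4 * pi / 5) = sin (pi / 5)"
  "sin (6 * pi / 5) = - sin (pi / 5)" "sin (7 * pi / 5) = - sin (2 * pi / 5)"
  "sin (8 * pi / 5) = - sin (2 * pi / 5)" "sin (9 * pi / 5) = - sin (pi / 5)"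
proof -
  have "3 * pi / 5 = pi - 2 * pi / 5" by simp
  then show "sin (3 * pi / 5) = sin (2 * pi / 5)" by (metis sin_pi_minus)
  have "4 * pi / 5 = pi - pi / 5" by simp
  then show "sin (4 * pi / 5) = sin (pi / 5)" by (metis sin_pi_minus)
  have "6 * pi / 5 = pi / 5 + pi" by simp
  then show "sin (6 * pi / 5) = - sin (pi / 5)" by (metis sin_periodic_pi)
  have "7 * pi / 5 = 2 * pi / 5 + pi" by simp
  then show "sin (7 * pi / 5) = - sin (2 * pi / 5)" by (metis sin_periodic_pi)
  have "8 * pi / 5 = (pi - 2 * pi / 5) + pi" by simp
  then show "sin (8 * pi / 5) = - sin (2 * pi / 5)" by (metis sin_periodic_pi sin_pi_minus)
  have "9 * pi / 5 = (pi - pi / 5) + pi" by simp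
  then show "sin (9 * pi / 5) = - sin (pi / 5)" by (metis sin_periodic_pi sin_pi_minus)
qed

lemma Im_vals:
  "Im (xi ^ 0) = 0" "Im xi = s1" "Im (xi ^ 1) = s1" "Im (xi ^ 2) = s2" "Im (xi ^ 3) = s2"
  "Im (xi ^ 4) = s1" "Im (xi ^ 5) = 0" "Im (xi ^ 6) = - s1" "Im (xi ^ 7) = - s2"
  "Im (xi ^ 8) = - s2" "Im (xi ^ 9) = - s1"
  using Im_xi_pow[of 1] Im_xi_pow[of 2] Im_xi_pow[of 3] Im_xi_pow[of 4] Im_xi_pow[of 5]
    Im_xi_pow[of 6] Im_xi_pow[of 7] Im_xi_pow[of 8] Im_xi_pow[of 9]
  by (simp_all add: s1_def s2_def sinvals del: power_Suc)

lemma sum10: "(\<Sum>j<(10::nat). f j) = f 0 + f 1 + f 2 + f 3 + f 4 + f 5 + f 6 + f 7 + f 8 + (f 9 :: 'a :: comm_monoid_add)"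
  by (simp add: eval_nat_numeral ac_simps)

lemma Im_comb: "Im (comb c) = (real (c 1) + real (c 4) - real (c 6) - real (c 9)) * s1
   + (real (c 2) + real (c 3) - real (c 7) - real (c 8)) * s2"
  unfolding comb_def Im_sum sum10 by (simp add: Im_vals algebra_simps del: power_Suc)

lemma cos5: "4 * cos (pi/5)^2 - 2 * cos (pi/5) - 1 = 0"
proof -
  define c where "c = cos (pi/5)"
  have "cos (3 * (pi/5)) = cos (pi - 2 * (pi/5))" by (simp add: field_simps)
  then have "4 * c^3 - 3 * c = - (2 * c^2 - 1)"
    unfolding cos_treble_cos cos_pi_minus cos_double_cos c_def by simp
  then have "(c + 1) * (4 * c^2 - 2 * c - 1) = 0" by (simp add: algebra_simps power2_eq_square power3_eq_cube)
  moreover have "c > 0" unfolding c_def by (rule cos_gt_zero_pi) (use pi_gt_zero in linarith)+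
  ultimately show ?thesis unfolding c_def[symmetric] by simp
qed

lemma s1_pos: "s1 > 0" unfolding s1_def by (rule sin_gt_zero) auto

lemma s2_eq: "s2 = s1 * (2 * cos (pi/5))"
  unfolding s1_def s2_def using sin_double[of "pi/5"] by (simp add: algebra_simps)

lemma no_int_sol: "(a::int)^2 + a * b - b^2 = 0 \<Longrightarrow> b = 0"
proof (induction "nat \<bar>b\<bar>" arbitrary: a b rule: less_induct)
  case less
  show ?case
  proof (rule ccontr)
    assume b0: "b \<noteq> 0"
    have ev: "even a \<and> even b"
    proof -
      have "even (a^2 + a * b - b^2)" using less.prems by simp
      then show ?thesis by (cases "even a"; cases "even b") auto
    qed
    then obtain a' b' where ab: "a = 2 * a'" "b = 2 * b'" by (auto elim!: evenE)
    have "4 * (a'^2 + a' * b' - b'^2) = 0" using less.prems unfolding ab by (simp add: algebra_simps power2_eq_square)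
    then have "a'^2 + a' * b' - b'^2 = 0" by simp
    moreover have "nat \<bar>b'\<bar> < nat \<bar>b\<bar>" using b0 ab by auto
    ultimately have "b' = 0" using less.hyps by blast
    then show False using b0 ab by simp
  qed
qed

lemma key:
  fixes A B :: int
  assumes "real_of_int A * s1 + real_of_int B * s2 = 0"
  shows "A = 0 \<and> B = 0"
proof -
  define x where "x = 2 * cos (pi/5)"
  have xx: "x^2 = x + 1" using cos5 unfolding x_def by (simp add: algebra_simps power2_eq_square)
  have "s1 * (A + B * x) = 0" using assms unfolding s2_eq x_def by (simp add: algebra_simps)
  then have e: "A + B * x = 0" using s1_pos by simp
  have "B = 0"
  proof (rule ccontr)
    assume b: "B \<noteq> 0"
    have "x = - A / B" using e b by (simp add: field_simps)
    then have "(A/B)^2 = - A / B + 1" using xx by (simp add: power2_eq_square)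
    then have "real_of_int A ^ 2 = - A * B + B^2" using b by (simp add: field_simps power2_eq_square)
    then have "real_of_int (A^2 + A * B - B^2) = 0" by simp
    then have "A^2 + A * B - B^2 = 0" by linarith
    then show False using no_int_sol b by blast
  qed
  then show ?thesis using e by simp
qed

lemma comb_add: "comb (\<lambda>t. a t + b t) = comb a + comb b"
  unfolding comb_def by (simp add: sum.distrib algebra_simps)

lemma comb_cong: "(\<And>t. t < 10 \<Longrightarrow> a t = b t) \<Longrightarrow> comb a = comb b"
  unfolding comb_def by simp

lemma comb_e: "i < 10 \<Longrightarrow> comb (\<lambda>t. if t = i then 1 else 0) = xi ^ i"
proof -
  assume i: "i < 10"
  have "comb (\<lambda>t. if t = i then 1 else 0) = (\<Sum>j<10. if j = i then xi ^ j else 0)"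
    unfolding comb_def by (rule sum.cong) auto
  then show ?thesis using i by (simp add: sum.delta)
qed

lemma generic:
  assumes le: "\<And>t. t < 10 \<Longrightarrow> m t \<le> nn t"
    and nz: "\<exists>j<10. m j \<noteq> 0"
    and lt: "(\<Sum>j<10. m j) < (\<Sum>j<10. nn j)"
    and rm: "comb m \<in> \<real>" and rn: "comb nn \<in> \<real>"
  shows "\<exists>m k :: nat \<Rightarrow> nat.
           (\<exists>j<10. m j \<noteq> 0) \<and> (\<exists>j<10. k j \<noteq> 0) \<and>
           (\<forall>j<10. m j + k j = nn j) \<and>
           comb m \<in> \<real> \<and> comb k \<in> \<real>"
proof -
  define k where "k = (\<lambda>t. nn t - m t)"
  have sp: "\<forall>j<10. m j + k j = nn j" using le unfolding k_def by auto
  have "comb nn = comb (\<lambda>t. m t + k t)" by (rule comb_cong) (simp add: sp)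
  then have "comb k = comb nn - comb m" by (simp add: comb_add)
  then have rk: "comb k \<in> \<real>" using rm rn by simp
  have "\<exists>j<10. k j \<noteq> 0"
  proof (rule ccontr)
    assume "\<not> ?thesis"
    then have "\<forall>j<10. nn j = m j" using sp by auto
    then have "(\<Sum>j<10. m j) = (\<Sum>j<10. nn j)" by (intro sum.cong) auto
    then show False using lt by simp
  qed
  then obtain j where "j < 10" "k j \<noteq> 0" by blast
  then show ?thesis using nz sp rm rk by (intro exI[of _ m] exI[of _ k] conjI) auto
qed

lemma single:
  assumes "i < 10" "nn i > 0" "Im (xi ^ i) = 0" "(\<Sum>j<10. nn j) \<ge> 3" "comb nn \<in> \<real>"
  shows "\<exists>m k :: nat \<Rightarrow> nat.
           (\<exists>j<10. m j \<noteq> 0) \<and> (\<exists>j<10. k j \<noteq> 0) \<and>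
           (\<forall>j<10. m j + k j = nn j) \<and>
           comb m \<in> \<real> \<and> comb k \<in> \<real>"
proof (rule generic[of "\<lambda>t. if t = i then 1 else 0"])
  show "\<And>t. t < 10 \<Longrightarrow> (if t = i then 1 else 0) \<le> nn t" using assms by auto
  show "\<exists>j<10. (if j = i then 1 else 0) \<noteq> (0::nat)" using assms by auto
  have "(\<Sum>j<10. (if j = i then 1 else 0::nat)) = 1" using assms(1) by (simp add: sum.delta)
  then show "(\<Sum>j<10. (if j = i then 1 else 0::nat)) < (\<Sum>j<10. nn j)" using assms by simp
  show "comb (\<lambda>t. if t = i then 1 else 0) \<in> \<real>" using assms comb_e complex_is_Real_iff by simp
qed (use assms in auto)

lemma pair:
  assumes "i < 10" "j < 10" "i \<noteq> j" "nn i > 0" "nn j > 0" "Im (xi ^ i) + Im (xi ^ j) = 0"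
    "(\<Sum>j<10. nn j) \<ge> 3" "comb nn \<in> \<real>"
  shows "\<exists>m k :: nat \<Rightarrow> nat.
           (\<exists>j<10. m j \<noteq> 0) \<and> (\<exists>j<10. k j \<noteq> 0) \<and>
           (\<forall>j<10. m j + k j = nn j) \<and>
           comb m \<in> \<real> \<and> comb k \<in> \<real>"
proof (rule generic[of "\<lambda>t. (if t = i then 1 else 0) + (if t = j then 1 else 0)"])
  show "\<And>t. t < 10 \<Longrightarrow> (if t = i then 1 else 0) + (if t = j then 1 else 0) \<le> nn t" using assms by auto
  show "\<exists>t<10. (if t = i then 1 else 0) + (if t = j then 1 else 0) \<noteq> (0::nat)" using assms by auto
  have "(\<Sum>t<10. (if t = i then 1 else 0) + (if t = j then 1 else 0::nat)) = 2" using assms(1,2) by (simp add: sum.distrib sum.delta)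
  then show "(\<Sum>t<10. (if t = i then 1 else 0) + (if t = j then 1 else 0::nat)) < (\<Sum>j<10. nn j)" using assms by simp
  show "comb (\<lambda>t. (if t = i then 1 else 0) + (if t = j then 1 else 0)) \<in> \<real>"
    using assms by (simp add: comb_add comb_e complex_is_Real_iff)
qed (use assms in auto)

theorem theorem6p6:
  fixes n :: nat and nn :: "nat \<Rightarrow> nat"
  assumes "n \<ge> 3"
    and "(\<Sum>j<10. nn j) = n"
    and "comb nn \<in> \<real>"
  shows "\<exists>m k :: nat \<Rightarrow> nat.
           (\<exists>j<10. m j \<noteq> 0) \<and> (\<exists>j<10. k j \<noteq> 0) \<and>
           (\<forall>j<10. m j + k j = nn j) \<and>
           comb m \<in> \<real> \<and> comb k \<in> \<real>"
proof -
  have S: "(\<Sum>j<10. nn j) \<ge> 3" using assms by simp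
  have "Im (comb nn) = 0" using assms(3) complex_is_Real_iff by blast
  then have "real_of_int (int (nn 1) + nn 4 - nn 6 - nn 9) * s1
      + real_of_int (int (nn 2) + nn 3 - nn 7 - nn 8) * s2 = 0" unfolding Im_comb by simp
  from key[OF this] have AB: "nn 1 + nn 4 = nn 6 + nn 9" "nn 2 + nn 3 = nn 7 + nn 8" by linarith+
  note P = pair[OF _ _ _ _ _ _ S assms(3)]
  note Q = single[OF _ _ _ S assms(3)]
  show ?thesis
  proof -
    consider "nn 0 > 0" | "nn 5 > 0" | "nn 1 > 0 \<and> nn 6 > 0" | "nn 1 > 0 \<and> nn 9 > 0"
      | "nn 4 > 0 \<and> nn 6 > 0" | "nn 4 > 0 \<and> nn 9 > 0"
      | "nn 2 > 0 \<and> nn 7 > 0" | "nn 2 > 0 \<and> nn 8 > 0"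
      | "nn 3 > 0 \<and> nn 7 > 0" | "nn 3 > 0 \<and> nn 8 > 0"
    proof -
      have "(\<Sum>j<10. nn j) = nn 0 + nn 1 + nn 2 + nn 3 + nn 4 + nn 5 + nn 6 + nn 7 + nn 8 + nn 9"
        by (rule sum10)
      then show ?thesis using that S AB by linarith
    qed
    then show ?thesis
    proof cases
      case 1
      then show ?thesis by (intro Q[of 0]) (simp_all add: Im_vals)
    next
      case 2
      then show ?thesis by (intro Q[of 5]) (simp_all add: Im_vals)
    next
      case 3
      then show ?thesis by (intro P[of 1 6]) (simp_all add: Im_vals)
    next
      case 4
      then show ?thesis by (intro P[of 1 9]) (simp_all add: Im_vals)
    next
      case 5
      then show ?thesis by (intro P[of 4 6]) (simp_all add: Im_vals)
    next
      case 6
      then show ?thesis by (intro P[of 4 9]) (simp_all add: Im_vals)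
    next
      case 7
      then show ?thesis by (intro P[of 2 7]) (simp_all add: Im_vals)
    next
      case 8
      then show ?thesis by (intro P[of 2 8]) (simp_all add: Im_vals)
    next
      case 9
      then show ?thesis by (intro P[of 3 7]) (simp_all add: Im_vals)
    next
      case 10
      then show ?thesis by (intro P[of 3 8]) (simp_all add: Im_vals)
    qed
  qed
qed

end
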